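(* A completely simple semigroup $S=(G,P,\Lambda,I)$ is an equational domain in the language $\mathcal{L}_S=\{\cdot,{}^{-1}\}\cup\{s\mid s\in S\}$ if and only if both of the following hold: (1) the sandwich matrix $P$ is non-singular; (2) the structural group $G$ is an equational domain in the group language $\mathcal{L}_G$.
   Context: Rees representation: a completely simple semigroup $S=(G,P,\Lambda,I)$ is given by a group $G$ (structural group), index sets $\Lambda,I$ (each containing an element $1$), and a matrix $P=(p_{i\lambda})_{i\in I,\lambda\in\Lambda}$ over $G$ (sandwich matrix) normalised so that $p_{1\lambda}=p_{i1}=1_G$; elements are triples $(\lambda,g,i)$ with product $(\lambda,g,i)(\mu,h,j)=(\lambda,gp_{i\mu}h,j)$ and inversion $(\lambda,g,i)^{-1}=(\lambda,p_{i\lambda}^{-1}g^{-1}p_{i\lambda}^{-1},i)$. $P$ is non-singular if it has no two equal rows and no two equal columns. The language $\mathcal{L}_S$ has a constant for each element of $S$; the group language $\mathcal{L}_G$ is $\{\cdot,{}^{-1},1\}$ plus a constant for each element of $G$. An equation is an equality of two terms; a system is a set of equations; an algebraic set is the solution set of a system; a structure is an equational domain (e.d.) if every finite union of algebraic sets is algebraic. *)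

theory Defs
  imports "HOL-Algebra.Group"
begin

datatype 'c trm = Var nat | Cst 'c | Mul "'c trm" "'c trm" | Inv "'c trm" | Unit

fun eval :: "('a \<Rightarrow> 'a \<Rightarrow> 'a) \<Rightarrow> ('a \<Rightarrow> 'a) \<Rightarrow> 'a \<Rightarrow> (nat \<Rightarrow> 'a) \<Rightarrow> 'a trm \<Rightarrow> 'a" where
  "eval m iv u \<rho> (Var k) = \<rho> k"
| "eval m iv u \<rho> (Cst c) = c"
| "eval m iv u \<rho> (Mul s t) = m (eval m iv u \<rho> s) (eval m iv u \<rho> t)"
| "eval m iv u \<rho> (Inv s) = iv (eval m iv u \<rho> s)"
| "eval m iv u \<rho> Unit = u"

fun vars :: "'c trm \<Rightarrow> nat set" where
  "vars (Var k) = {k}"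
| "vars (Cst c) = {}"
| "vars (Mul s t) = vars s \<union> vars t"
| "vars (Inv s) = vars s"
| "vars Unit = {}"

fun csts :: "'c trm \<Rightarrow> 'c set" where
  "csts (Var k) = {}"
| "csts (Cst c) = {c}"
| "csts (Mul s t) = csts s \<union> csts t"
| "csts (Inv s) = csts s"
| "csts Unit = {}"

fun has_unit :: "'c trm \<Rightarrow> bool" where
  "has_unit (Var k) = False"
| "has_unit (Cst c) = False"
| "has_unit (Mul s t) = (has_unit s \<or> has_unit t)"
| "has_unit (Inv s) = has_unit s"
| "has_unit Unit = True"

text \<open>A language is given as a set L of admissible terms.\<close>

definition solution_set ::
  "'a set \<Rightarrow> ('a \<Rightarrow> 'a \<Rightarrow> 'a) \<Rightarrow> ('a \<Rightarrow> 'a) \<Rightarrow> 'a \<Rightarrow> nat \<Rightarrow> ('a trm \<times> 'a trm) set \<Rightarrow> 'a list set" where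
  "solution_set A m iv u n Sys =
     {xs. length xs = n \<and> set xs \<subseteq> A \<and>
          (\<forall>(s, t) \<in> Sys. eval m iv u (nth xs) s = eval m iv u (nth xs) t)}"

definition algebraic_set ::
  "'a trm set \<Rightarrow> 'a set \<Rightarrow> ('a \<Rightarrow> 'a \<Rightarrow> 'a) \<Rightarrow> ('a \<Rightarrow> 'a) \<Rightarrow> 'a \<Rightarrow> nat \<Rightarrow> 'a list set \<Rightarrow> bool" where
  "algebraic_set L A m iv u n Y \<longleftrightarrow>
     (\<exists>Sys. (\<forall>(s, t) \<in> Sys. s \<in> L \<and> t \<in> L \<and> vars s \<subseteq> {..<n} \<and> vars t \<subseteq> {..<n})
           \<and> Y = solution_set A m iv u n Sys)"

definition equational_domain ::
  "'a trm set \<Rightarrow> 'a set \<Rightarrow> ('a \<Rightarrow> 'a \<Rightarrow> 'a) \<Rightarrow> ('a \<Rightarrow> 'a) \<Rightarrow> 'a \<Rightarrow> bool" where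
  "equational_domain L A m iv u \<longleftrightarrow>
     (\<forall>n F. finite F \<and> F \<noteq> {} \<and> (\<forall>Y \<in> F. algebraic_set L A m iv u n Y)
        \<longrightarrow> algebraic_set L A m iv u n (\<Union>F))"

definition group_terms :: "('g, 'b) monoid_scheme \<Rightarrow> 'g trm set" where
  "group_terms G = {t. csts t \<subseteq> carrier G}"

definition group_ed :: "('g, 'b) monoid_scheme \<Rightarrow> bool" where
  "group_ed G = equational_domain (group_terms G) (carrier G) (mult G) (m_inv G) (one G)"

text \<open>Completely simple semigroup (G,P,Lambda,I); elements are triples (lambda, g, i).\<close>
definition rees_carrier :: "('g, 'b) monoid_scheme \<Rightarrow> 'l set \<Rightarrow> 'i set \<Rightarrow> ('l \<times> 'g \<times> 'i) set" where
  "rees_carrier G Lam I = Lam \<times> carrier G \<times> I"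

fun rees_mult :: "('g, 'b) monoid_scheme \<Rightarrow> ('i \<Rightarrow> 'l \<Rightarrow> 'g) \<Rightarrow>
    ('l \<times> 'g \<times> 'i) \<Rightarrow> ('l \<times> 'g \<times> 'i) \<Rightarrow> ('l \<times> 'g \<times> 'i)" where
  "rees_mult G P (l, g, i) (m, h, j) = (l, g \<otimes>\<^bsub>G\<^esub> P i m \<otimes>\<^bsub>G\<^esub> h, j)"

fun rees_inv :: "('g, 'b) monoid_scheme \<Rightarrow> ('i \<Rightarrow> 'l \<Rightarrow> 'g) \<Rightarrow>
    ('l \<times> 'g \<times> 'i) \<Rightarrow> ('l \<times> 'g \<times> 'i)" where
  "rees_inv G P (l, g, i) =
     (l, inv\<^bsub>G\<^esub> (P i l) \<otimes>\<^bsub>G\<^esub> inv\<^bsub>G\<^esub> g \<otimes>\<^bsub>G\<^esub> inv\<^bsub>G\<^esub> (P i l), i)"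

definition rees_terms :: "('g, 'b) monoid_scheme \<Rightarrow> 'l set \<Rightarrow> 'i set \<Rightarrow> ('l \<times> 'g \<times> 'i) trm set" where
  "rees_terms G Lam I = {t. csts t \<subseteq> rees_carrier G Lam I \<and> \<not> has_unit t}"

definition rees_ed :: "('g, 'b) monoid_scheme \<Rightarrow> ('i \<Rightarrow> 'l \<Rightarrow> 'g) \<Rightarrow> 'l set \<Rightarrow> 'i set \<Rightarrow> bool" where
  "rees_ed G P Lam I = equational_domain (rees_terms G Lam I) (rees_carrier G Lam I)
      (rees_mult G P) (rees_inv G P) undefined"

definition sandwich_matrix :: "('g, 'b) monoid_scheme \<Rightarrow> ('i \<Rightarrow> 'l \<Rightarrow> 'g) \<Rightarrow> 'l set \<Rightarrow> 'i set \<Rightarrow> 'l \<Rightarrow> 'i \<Rightarrow> bool" where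
  "sandwich_matrix G P Lam I l1 i1 \<longleftrightarrow>
     l1 \<in> Lam \<and> i1 \<in> I \<and>
     (\<forall>i \<in> I. \<forall>l \<in> Lam. P i l \<in> carrier G) \<and>
     (\<forall>l \<in> Lam. P i1 l = \<one>\<^bsub>G\<^esub>) \<and> (\<forall>i \<in> I. P i l1 = \<one>\<^bsub>G\<^esub>)"

definition non_singular :: "('i \<Rightarrow> 'l \<Rightarrow> 'g) \<Rightarrow> 'l set \<Rightarrow> 'i set \<Rightarrow> bool" where
  "non_singular P Lam I \<longleftrightarrow>
     (\<forall>i \<in> I. \<forall>j \<in> I. (\<forall>l \<in> Lam. P i l = P j l) \<longrightarrow> i = j) \<and>
     (\<forall>l \<in> Lam. \<forall>m \<in> Lam. (\<forall>i \<in> I. P i l = P i m) \<longrightarrow> l = m)"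

end

theory Submission
  imports Defs
begin



fun subst :: "(nat \<Rightarrow> 'c trm) \<Rightarrow> 'c trm \<Rightarrow> 'c trm" where
  "subst \<sigma> (Var k) = \<sigma> k"
| "subst \<sigma> (Cst c) = Cst c"
| "subst \<sigma> (Mul s t) = Mul (subst \<sigma> s) (subst \<sigma> t)"
| "subst \<sigma> (Inv s) = Inv (subst \<sigma> s)"
| "subst \<sigma> Unit = Unit"

lemma eval_cong: "(\<And>k. k \<in> vars t \<Longrightarrow> \<rho> k = \<rho>' k) \<Longrightarrow> eval m iv u \<rho> t = eval m iv u \<rho>' t"
  by (induction t) auto

lemma eval_subst: "eval m iv u \<rho> (subst \<sigma> t) = eval m iv u (\<lambda>k. eval m iv u \<rho> (\<sigma> k)) t"
  by (induction t) auto

lemma vars_subst: "vars (subst \<sigma> t) = (\<Union>k\<in>vars t. vars (\<sigma> k))"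
  by (induction t) auto

lemma csts_subst: "csts (subst \<sigma> t) \<subseteq> csts t \<union> (\<Union>k\<in>vars t. csts (\<sigma> k))"
  by (induction t) auto

lemma has_unit_subst: "has_unit (subst \<sigma> t) \<longleftrightarrow> has_unit t \<or> (\<exists>k\<in>vars t. has_unit (\<sigma> k))"
  by (induction t) auto

definition D4 :: "'a set \<Rightarrow> 'a list set" where
  "D4 A = {xs. length xs = 4 \<and> set xs \<subseteq> A \<and> (xs!0 = xs!1 \<or> xs!2 = xs!3)}"

definition sg :: "'c trm \<Rightarrow> 'c trm \<Rightarrow> 'c trm \<Rightarrow> 'c trm \<Rightarrow> nat \<Rightarrow> 'c trm" where
  "sg a b c d k = (if k = 0 then a else if k = 1 then b else if k = 2 then c else d)"

lemma nth4: "(k::nat) < 4 \<Longrightarrow> [f a, f b, f c, f d] ! k = f (sg a b c d k)"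
  proof -
  assume "k < 4" then have "k = 0 \<or> k = 1 \<or> k = 2 \<or> k = 3" by auto
  then show ?thesis by (auto simp: sg_def)
qed

lemma union2:
  assumes Lsub: "\<And>t \<sigma>. t \<in> L \<Longrightarrow> (\<And>k. \<sigma> k \<in> L) \<Longrightarrow> subst \<sigma> t \<in> L"
    and Lclos: "\<And>t \<rho>. t \<in> L \<Longrightarrow> (\<And>k. k \<in> vars t \<Longrightarrow> \<rho> k \<in> A) \<Longrightarrow> eval m iv u \<rho> t \<in> A"
    and D: "algebraic_set L A m iv u 4 (D4 A)"
    and Y1: "algebraic_set L A m iv u n Y1" and Y2: "algebraic_set L A m iv u n Y2"
  shows "algebraic_set L A m iv u n (Y1 \<union> Y2)"
proof -
  obtain T where T: "\<forall>(s, t) \<in> T. s \<in> L \<and> t \<in> L \<and> vars s \<subseteq> {..<4} \<and> vars t \<subseteq> {..<4}"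
    and DT: "D4 A = solution_set A m iv u 4 T" using D unfolding algebraic_set_def by blast
  obtain S1 where S1: "\<forall>(s, t) \<in> S1. s \<in> L \<and> t \<in> L \<and> vars s \<subseteq> {..<n} \<and> vars t \<subseteq> {..<n}"
    and Y1S: "Y1 = solution_set A m iv u n S1" using Y1 unfolding algebraic_set_def by blast
  obtain S2 where S2: "\<forall>(s, t) \<in> S2. s \<in> L \<and> t \<in> L \<and> vars s \<subseteq> {..<n} \<and> vars t \<subseteq> {..<n}"
    and Y2S: "Y2 = solution_set A m iv u n S2" using Y2 unfolding algebraic_set_def by blast
  define Sys where "Sys = (\<lambda>((s1,t1),(s2,t2),(s,t)). (subst (sg s1 t1 s2 t2) s, subst (sg s1 t1 s2 t2) t)) ` (S1 \<times> S2 \<times> T)"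
  have sgL: "sg s1 t1 s2 t2 k \<in> L \<and> vars (sg s1 t1 s2 t2 k) \<subseteq> {..<n}"
    if "(s1,t1) \<in> S1" "(s2,t2) \<in> S2" for s1 t1 s2 t2 k
    using S1 S2 that by (auto simp: sg_def)
  have SysOK: "\<forall>(s, t) \<in> Sys. s \<in> L \<and> t \<in> L \<and> vars s \<subseteq> {..<n} \<and> vars t \<subseteq> {..<n}"
  proof (clarsimp simp: Sys_def)
    fix s1 t1 s2 t2 s t
    assume a: "(s1,t1) \<in> S1" "(s2,t2) \<in> S2" "(s,t) \<in> T"
    show "subst (sg s1 t1 s2 t2) s \<in> L \<and> subst (sg s1 t1 s2 t2) t \<in> L \<and>
          vars (subst (sg s1 t1 s2 t2) s) \<subseteq> {..<n} \<and> vars (subst (sg s1 t1 s2 t2) t) \<subseteq> {..<n}"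
      using sgL[OF a(1,2)] T a(3) by (auto simp: vars_subst intro!: Lsub)
  qed
  have "Y1 \<union> Y2 = solution_set A m iv u n Sys"
  proof (rule Set.set_eqI)
    fix xs
    let ?e = "eval m iv u (nth xs)"
    show "xs \<in> Y1 \<union> Y2 \<longleftrightarrow> xs \<in> solution_set A m iv u n Sys"
    proof (cases "length xs = n \<and> set xs \<subseteq> A")
      case False
      then show ?thesis by (auto simp: Y1S Y2S solution_set_def)
    next
      case True
      have inA: "?e t \<in> A" if "t \<in> L" "vars t \<subseteq> {..<n}" for t
        using True that by (intro Lclos) (auto simp: subset_iff)
      have key: "(\<forall>(s, t)\<in>T. ?e (subst (sg s1 t1 s2 t2) s) = ?e (subst (sg s1 t1 s2 t2) t))
           \<longleftrightarrow> (?e s1 = ?e t1 \<or> ?e s2 = ?e t2)"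
        if a: "(s1,t1) \<in> S1" "(s2,t2) \<in> S2" for s1 t1 s2 t2
      proof -
        let ?ys = "[?e s1, ?e t1, ?e s2, ?e t2]"
        have ys: "?ys ! k = ?e (sg s1 t1 s2 t2 k)" if "k < 4" for k
          using nth4[OF that, of ?e] .
        have "?e (subst (sg s1 t1 s2 t2) s) = eval m iv u (nth ?ys) s" if "vars s \<subseteq> {..<4}" for s
          unfolding eval_subst using that ys by (intro eval_cong) auto
        then have "(\<forall>(s, t)\<in>T. ?e (subst (sg s1 t1 s2 t2) s) = ?e (subst (sg s1 t1 s2 t2) t))
            \<longleftrightarrow> ?ys \<in> solution_set A m iv u 4 T"
          using T inA a S1 S2 unfolding solution_set_def by (auto 0 3)
        also have "\<dots> \<longleftrightarrow> ?ys \<in> D4 A" using DT by simp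
        also have "\<dots> \<longleftrightarrow> (?e s1 = ?e t1 \<or> ?e s2 = ?e t2)"
          using inA a S1 S2 unfolding D4_def by auto
        finally show ?thesis .
      qed
      have "xs \<in> solution_set A m iv u n Sys \<longleftrightarrow>
         (\<forall>(s1,t1)\<in>S1. \<forall>(s2,t2)\<in>S2. ?e s1 = ?e t1 \<or> ?e s2 = ?e t2)"
        using True key unfolding solution_set_def Sys_def by fastforce
      also have "\<dots> \<longleftrightarrow> (\<forall>(s1,t1)\<in>S1. ?e s1 = ?e t1) \<or> (\<forall>(s2,t2)\<in>S2. ?e s2 = ?e t2)"
        by blast
      also have "\<dots> \<longleftrightarrow> xs \<in> Y1 \<union> Y2"
        using True unfolding Y1S Y2S solution_set_def by auto
      finally show ?thesis by simp
    qed
  qed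
  then show ?thesis using SysOK unfolding algebraic_set_def by blast
qed

lemma ed_criterion:
  assumes Lsub: "\<And>t \<sigma>. t \<in> L \<Longrightarrow> (\<And>k. \<sigma> k \<in> L) \<Longrightarrow> subst \<sigma> t \<in> L"
    and Lclos: "\<And>t \<rho>. t \<in> L \<Longrightarrow> (\<And>k. k \<in> vars t \<Longrightarrow> \<rho> k \<in> A) \<Longrightarrow> eval m iv u \<rho> t \<in> A"
    and D: "algebraic_set L A m iv u 4 (D4 A)"
  shows "equational_domain L A m iv u"
  unfolding equational_domain_def
proof (intro allI impI)
  fix n F assume "finite F \<and> F \<noteq> {} \<and> (\<forall>Y\<in>F. algebraic_set L A m iv u n Y)"
  then have "finite F" "F \<noteq> {}" "\<forall>Y\<in>F. algebraic_set L A m iv u n Y" by auto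
  then show "algebraic_set L A m iv u n (\<Union>F)"
  proof (induction F rule: finite_ne_induct)
    case (singleton x) then show ?case by simp
  next
    case (insert x F) then show ?case using union2[OF Lsub Lclos D] by simp
  qed
qed

lemma ed_D4:
  assumes Lvar: "\<And>k. Var k \<in> L" and E: "equational_domain L A m iv u"
  shows "algebraic_set L A m iv u 4 (D4 A)"
proof -
  let ?Y1 = "solution_set A m iv u 4 {(Var 0, Var 1)}"
  let ?Y2 = "solution_set A m iv u 4 {(Var 2, Var 3)}"
  have "algebraic_set L A m iv u 4 ?Y1"
    unfolding algebraic_set_def by (rule exI[of _ "{(Var 0, Var 1)}"]) (simp add: Lvar)
  moreover have "algebraic_set L A m iv u 4 ?Y2"
    unfolding algebraic_set_def by (rule exI[of _ "{(Var 2, Var 3)}"]) (simp add: Lvar)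
  ultimately have U: "algebraic_set L A m iv u 4 (\<Union>{?Y1, ?Y2})"
    using E unfolding equational_domain_def by (intro E[unfolded equational_domain_def, rule_format]) auto
  have "\<Union>{?Y1, ?Y2} = D4 A" unfolding D4_def solution_set_def by auto
  then show ?thesis using U by simp
qed




lemma group_Lsub: "t \<in> group_terms G \<Longrightarrow> (\<And>k. \<sigma> k \<in> group_terms G) \<Longrightarrow> subst \<sigma> t \<in> group_terms G"
  unfolding group_terms_def using csts_subst[of \<sigma> t] by blast

lemma group_Lclos: "group G \<Longrightarrow> t \<in> group_terms G \<Longrightarrow> (\<And>k. k \<in> vars t \<Longrightarrow> \<rho> k \<in> carrier G)
   \<Longrightarrow> eval (mult G) (m_inv G) (one G) \<rho> t \<in> carrier G"
  unfolding group_terms_def by (induction t) (auto intro: group.inv_closed monoid.m_closed group.is_monoid)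

lemma group_Lvar: "Var k \<in> group_terms G" by (simp add: group_terms_def)

lemma rees_Lsub: "t \<in> rees_terms G Lam I \<Longrightarrow> (\<And>k. \<sigma> k \<in> rees_terms G Lam I) \<Longrightarrow> subst \<sigma> t \<in> rees_terms G Lam I"
  unfolding rees_terms_def using csts_subst[of \<sigma> t] has_unit_subst[of \<sigma> t] by blast

lemma rees_Lvar: "Var k \<in> rees_terms G Lam I" by (simp add: rees_terms_def)

locale rees = group G for G :: "('g, 'b) monoid_scheme" (structure) +
  fixes P :: "'i \<Rightarrow> 'l \<Rightarrow> 'g" and Lam :: "'l set" and I :: "'i set" and l1 :: 'l and i1 :: 'i
  assumes sw: "sandwich_matrix G P Lam I l1 i1"
begin

abbreviation "S \<equiv> rees_carrier G Lam I"
abbreviation "evS \<equiv> eval (rees_mult G P) (rees_inv G P) undefined"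
abbreviation "evG \<equiv> eval (mult G) (m_inv G) (one G)"

lemma l1: "l1 \<in> Lam" and i1: "i1 \<in> I"
  and Pc: "\<And>i l. i \<in> I \<Longrightarrow> l \<in> Lam \<Longrightarrow> P i l \<in> carrier G"
  and Pi1: "\<And>l. l \<in> Lam \<Longrightarrow> P i1 l = \<one>"
  and Pl1: "\<And>i. i \<in> I \<Longrightarrow> P i l1 = \<one>"
  using sw unfolding sandwich_matrix_def by auto

lemma mult_closed: "x \<in> S \<Longrightarrow> y \<in> S \<Longrightarrow> rees_mult G P x y \<in> S"
  by (cases x; cases y) (auto simp: rees_carrier_def Pc)

lemma inv_closedS: "x \<in> S \<Longrightarrow> rees_inv G P x \<in> S"
  by (cases x) (auto simp: rees_carrier_def Pc)

lemma rees_Lclos: "t \<in> rees_terms G Lam I \<Longrightarrow> (\<And>k. k \<in> vars t \<Longrightarrow> \<rho> k \<in> S) \<Longrightarrow> evS \<rho> t \<in> S"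
  unfolding rees_terms_def by (induction t) (auto intro: mult_closed inv_closedS)

definition w :: "'i \<Rightarrow> 'l \<Rightarrow> ('l \<times> 'g \<times> 'i) trm \<Rightarrow> ('l \<times> 'g \<times> 'i) trm" where
  "w j \<mu> t = Mul (Mul (Cst (l1, \<one>, j)) t) (Cst (\<mu>, \<one>, i1))"

definition Yv :: "'i \<Rightarrow> 'l \<Rightarrow> ('l \<times> 'g \<times> 'i) \<Rightarrow> 'g" where
  "Yv j \<mu> x = P j (fst x) \<otimes> fst (snd x) \<otimes> P (snd (snd x)) \<mu>"

lemma eval_w: "evS \<rho> t \<in> S \<Longrightarrow> j \<in> I \<Longrightarrow> \<mu> \<in> Lam \<Longrightarrow> evS \<rho> (w j \<mu> t) = (l1, Yv j \<mu> (evS \<rho> t), i1)"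
  unfolding w_def Yv_def by (cases "evS \<rho> t") (auto simp: rees_carrier_def Pc)

lemma Yv_closed: "x \<in> S \<Longrightarrow> j \<in> I \<Longrightarrow> \<mu> \<in> Lam \<Longrightarrow> Yv j \<mu> x \<in> carrier G"
  unfolding Yv_def by (cases x) (auto simp: rees_carrier_def Pc)

lemma w_terms: "t \<in> rees_terms G Lam I \<Longrightarrow> j \<in> I \<Longrightarrow> \<mu> \<in> Lam \<Longrightarrow> w j \<mu> t \<in> rees_terms G Lam I"
  unfolding w_def rees_terms_def rees_carrier_def using l1 i1 by auto

lemma separation:
  assumes ns: "non_singular P Lam I" and x: "x \<in> S" and x': "x' \<in> S"
    and eq: "\<forall>j\<in>I. \<forall>\<mu>\<in>Lam. Yv j \<mu> x = Yv j \<mu> x'"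
  shows "x = x'"
proof -
  obtain l g i where xe: "x = (l, g, i)" by (cases x)
  obtain l' g' i' where xe': "x' = (l', g', i')" by (cases x')
  have c: "l \<in> Lam" "g \<in> carrier G" "i \<in> I" "l' \<in> Lam" "g' \<in> carrier G" "i' \<in> I"
    using x x' xe xe' by (auto simp: rees_carrier_def)
  have gg: "g = g'" using eq[rule_format, OF i1 l1] c by (simp add: Yv_def xe xe' Pi1 Pl1)
  have "P j l = P j l'" if "j \<in> I" for j
  proof -
    have "P j l \<otimes> g = P j l' \<otimes> g" using eq[rule_format, OF that l1] c gg that
      by (simp add: Yv_def xe xe' Pl1 Pc)
    then show ?thesis using c that by (simp add: Pc)
  qed
  then have ll: "l = l'" using ns c unfolding non_singular_def by blast
  have "P i \<mu> = P i' \<mu>" if "\<mu> \<in> Lam" for \<mu>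
  proof -
    have "g \<otimes> P i \<mu> = g \<otimes> P i' \<mu>" using eq[rule_format, OF i1 that] c gg that
      by (simp add: Yv_def xe xe' Pi1 Pc)
    then show ?thesis using c that by (simp add: Pc)
  qed
  then have "i = i'" using ns c unfolding non_singular_def by blast
  then show ?thesis using gg ll xe xe' by simp
qed

end



context rees begin

fun embT :: "(nat \<Rightarrow> ('l \<times> 'g \<times> 'i) trm) \<Rightarrow> 'g trm \<Rightarrow> ('l \<times> 'g \<times> 'i) trm" where
  "embT \<sigma> (Var k) = \<sigma> k"
| "embT \<sigma> (Cst c) = Cst (l1, c, i1)"
| "embT \<sigma> (Mul s t) = Mul (embT \<sigma> s) (embT \<sigma> t)"
| "embT \<sigma> (Inv s) = Inv (embT \<sigma> s)"
| "embT \<sigma> Unit = Cst (l1, \<one>, i1)"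

lemma eval_embT:
  assumes "t \<in> group_terms G" "\<And>k. k \<in> vars t \<Longrightarrow> evS \<rho> (\<sigma> k) = (l1, y k, i1) \<and> y k \<in> carrier G"
  shows "evS \<rho> (embT \<sigma> t) = (l1, evG y t, i1)"
  using assms unfolding group_terms_def
proof (induction t)
  case (Mul s t)
  then have "evG y s \<in> carrier G" "evG y t \<in> carrier G"
    using group_Lclos[OF is_group, of _ y] by (auto simp: group_terms_def)
  then show ?case using Mul by (simp add: Pi1 l1)
next
  case (Inv s)
  then have "evG y s \<in> carrier G"
    using group_Lclos[OF is_group, of _ y] by (auto simp: group_terms_def)
  then show ?case using Inv by (simp add: Pi1 l1)
qed auto

lemma vars_embT: "vars (embT \<sigma> t) = (\<Union>k\<in>vars t. vars (\<sigma> k))"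
  by (induction t) auto

lemma embT_terms: "t \<in> group_terms G \<Longrightarrow> (\<And>k. \<sigma> k \<in> rees_terms G Lam I) \<Longrightarrow> embT \<sigma> t \<in> rees_terms G Lam I"
  unfolding group_terms_def rees_terms_def
  by (induction t) (auto simp: rees_carrier_def l1 i1)

lemma rees_D4:
  assumes ns: "non_singular P Lam I" and ged: "group_ed G"
  shows "algebraic_set (rees_terms G Lam I) S (rees_mult G P) (rees_inv G P) undefined 4 (D4 S)"
proof -
  have "algebraic_set (group_terms G) (carrier G) (mult G) (m_inv G) (one G) 4 (D4 (carrier G))"
    using ged unfolding group_ed_def by (intro ed_D4 group_Lvar)
  then obtain T where T: "\<forall>(s, t) \<in> T. s \<in> group_terms G \<and> t \<in> group_terms G \<and> vars s \<subseteq> {..<4} \<and> vars t \<subseteq> {..<4}"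
    and DT: "D4 (carrier G) = solution_set (carrier G) (mult G) (m_inv G) (one G) 4 T"
    unfolding algebraic_set_def by blast
  define \<sigma> where "\<sigma> = (\<lambda>(j, \<mu>, j', \<mu>'). sg (w j \<mu> (Var 0)) (w j \<mu> (Var 1)) (w j' \<mu>' (Var 2)) (w j' \<mu>' (Var 3)))"
  define Sys where "Sys = (\<lambda>(q, (s, t)). (embT (\<sigma> q) s, embT (\<sigma> q) t)) ` ((I \<times> Lam \<times> I \<times> Lam) \<times> T)"
  have \<sigma>L: "\<sigma> q k \<in> rees_terms G Lam I \<and> vars (\<sigma> q k) \<subseteq> {..<4}" if "q \<in> I \<times> Lam \<times> I \<times> Lam" for q k
  proof
    show "\<sigma> q k \<in> rees_terms G Lam I" using that by (auto simp: \<sigma>_def sg_def intro!: w_terms rees_Lvar)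
    show "vars (\<sigma> q k) \<subseteq> {..<4}" using that by (auto simp: \<sigma>_def sg_def w_def split: if_splits)
  qed
  have SysOK: "\<forall>(s, t) \<in> Sys. s \<in> rees_terms G Lam I \<and> t \<in> rees_terms G Lam I \<and> vars s \<subseteq> {..<4} \<and> vars t \<subseteq> {..<4}"
  proof (clarsimp simp: Sys_def)
    fix j \<mu> j' \<mu>' s t
    assume a: "j \<in> I" "\<mu> \<in> Lam" "j' \<in> I" "\<mu>' \<in> Lam" "(s,t) \<in> T"
    let ?q = "(j, \<mu>, j', \<mu>')"
    have q: "?q \<in> I \<times> Lam \<times> I \<times> Lam" using a by auto
    show "embT (\<sigma> ?q) s \<in> rees_terms G Lam I \<and> embT (\<sigma> ?q) t \<in> rees_terms G Lam I \<and>
          vars (embT (\<sigma> ?q) s) \<subseteq> {..<4} \<and> vars (embT (\<sigma> ?q) t) \<subseteq> {..<4}"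
      using \<sigma>L[OF q] T a(5) by (auto simp: vars_embT intro!: embT_terms)
  qed
  have "D4 S = solution_set S (rees_mult G P) (rees_inv G P) undefined 4 Sys"
  proof (rule Set.set_eqI)
    fix xs
    let ?e = "evS (nth xs)"
    show "xs \<in> D4 S \<longleftrightarrow> xs \<in> solution_set S (rees_mult G P) (rees_inv G P) undefined 4 Sys"
    proof (cases "length xs = 4 \<and> set xs \<subseteq> S")
      case False
      then show ?thesis by (auto simp: D4_def solution_set_def)
    next
      case True
      have xsS: "xs ! k \<in> S" if "k < 4" for k using True that by auto
      have key: "(\<forall>(s, t)\<in>T. ?e (embT (\<sigma> (j,\<mu>,j',\<mu>')) s) = ?e (embT (\<sigma> (j,\<mu>,j',\<mu>')) t))
           \<longleftrightarrow> (Yv j \<mu> (xs!0) = Yv j \<mu> (xs!1) \<or> Yv j' \<mu>' (xs!2) = Yv j' \<mu>' (xs!3))"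
        if a: "j \<in> I" "\<mu> \<in> Lam" "j' \<in> I" "\<mu>' \<in> Lam" for j \<mu> j' \<mu>'
      proof -
        let ?q = "(j, \<mu>, j', \<mu>')"
        define y where "y = (\<lambda>k. fst (snd (?e (\<sigma> ?q k))))"
        let ?ys = "[y 0, y 1, y 2, y 3]"
        have ev\<sigma>: "?e (\<sigma> ?q k) = (l1, y k, i1) \<and> y k \<in> carrier G" if "k < 4" for k
        proof -
          have "k = 0 \<or> k = 1 \<or> k = 2 \<or> k = 3" using that by auto
          then show ?thesis using xsS that a
            by (auto simp: y_def \<sigma>_def sg_def eval_w Yv_closed)
        qed
        have yv: "y 0 = Yv j \<mu> (xs!0)" "y 1 = Yv j \<mu> (xs!1)" "y 2 = Yv j' \<mu>' (xs!2)" "y 3 = Yv j' \<mu>' (xs!3)"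
          using xsS a by (auto simp: y_def \<sigma>_def sg_def eval_w)
        have ysn: "?ys ! k = y k" if "k < 4" for k
        proof -
          have "k = 0 \<or> k = 1 \<or> k = 2 \<or> k = 3" using that by auto
          then show ?thesis by auto
        qed
        have ee: "?e (embT (\<sigma> ?q) s) = (l1, evG (nth ?ys) s, i1)"
          if "s \<in> group_terms G" "vars s \<subseteq> {..<4}" for s
        proof -
          have "?e (embT (\<sigma> ?q) s) = (l1, evG y s, i1)"
            using that ev\<sigma> by (intro eval_embT) auto
          also have "evG y s = evG (nth ?ys) s" using that ysn by (intro eval_cong) auto
          finally show ?thesis .
        qed
        have ysG: "set ?ys \<subseteq> carrier G" using ev\<sigma> by auto
        have "(\<forall>(s, t)\<in>T. ?e (embT (\<sigma> ?q) s) = ?e (embT (\<sigma> ?q) t))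
            \<longleftrightarrow> ?ys \<in> solution_set (carrier G) (mult G) (m_inv G) (one G) 4 T"
          using T ee ysG unfolding solution_set_def by (auto 0 3)
        also have "\<dots> \<longleftrightarrow> ?ys \<in> D4 (carrier G)" using DT by simp
        also have "\<dots> \<longleftrightarrow> (y 0 = y 1 \<or> y 2 = y 3)" using ysG unfolding D4_def by auto
        finally show ?thesis using yv by simp
      qed
      let ?A = "\<lambda>j \<mu>. Yv j \<mu> (xs!0) = Yv j \<mu> (xs!1)"
      let ?B = "\<lambda>j \<mu>. Yv j \<mu> (xs!2) = Yv j \<mu> (xs!3)"
      have "xs \<in> solution_set S (rees_mult G P) (rees_inv G P) undefined 4 Sys \<longleftrightarrow>
         (\<forall>p\<in>Sys. ?e (fst p) = ?e (snd p))"
        using True unfolding solution_set_def by (simp add: case_prod_beta)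
      also have "\<dots> \<longleftrightarrow> (\<forall>j\<in>I. \<forall>\<mu>\<in>Lam. \<forall>j'\<in>I. \<forall>\<mu>'\<in>Lam. ?A j \<mu> \<or> ?B j' \<mu>')"
      proof
        assume H: "\<forall>p\<in>Sys. ?e (fst p) = ?e (snd p)"
        show "\<forall>j\<in>I. \<forall>\<mu>\<in>Lam. \<forall>j'\<in>I. \<forall>\<mu>'\<in>Lam. ?A j \<mu> \<or> ?B j' \<mu>'"
        proof (intro ballI)
          fix j \<mu> j' \<mu>' assume a: "j \<in> I" "\<mu> \<in> Lam" "j' \<in> I" "\<mu>' \<in> Lam"
          have "\<forall>(s, t)\<in>T. ?e (embT (\<sigma> (j,\<mu>,j',\<mu>')) s) = ?e (embT (\<sigma> (j,\<mu>,j',\<mu>')) t)"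
          proof (intro ballI, clarify)
            fix s t assume st: "(s,t) \<in> T"
            have "(embT (\<sigma> (j,\<mu>,j',\<mu>')) s, embT (\<sigma> (j,\<mu>,j',\<mu>')) t) \<in> Sys"
              unfolding Sys_def using st a by (intro image_eqI[where x="((j,\<mu>,j',\<mu>'),(s,t))"]) auto
            from H[rule_format, OF this] show "?e (embT (\<sigma> (j,\<mu>,j',\<mu>')) s) = ?e (embT (\<sigma> (j,\<mu>,j',\<mu>')) t)"
              by simp
          qed
          then show "?A j \<mu> \<or> ?B j' \<mu>'" using key[OF a] by simp
        qed
      next
        assume H: "\<forall>j\<in>I. \<forall>\<mu>\<in>Lam. \<forall>j'\<in>I. \<forall>\<mu>'\<in>Lam. ?A j \<mu> \<or> ?B j' \<mu>'"
        show "\<forall>p\<in>Sys. ?e (fst p) = ?e (snd p)"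
        proof
          fix p assume "p \<in> Sys"
          then obtain j \<mu> j' \<mu>' s t where a: "j \<in> I" "\<mu> \<in> Lam" "j' \<in> I" "\<mu>' \<in> Lam" and st: "(s,t) \<in> T"
            and p: "p = (embT (\<sigma> (j,\<mu>,j',\<mu>')) s, embT (\<sigma> (j,\<mu>,j',\<mu>')) t)"
            unfolding Sys_def by auto
          have "?A j \<mu> \<or> ?B j' \<mu>'" using H a by blast
          then have "\<forall>(s, t)\<in>T. ?e (embT (\<sigma> (j,\<mu>,j',\<mu>')) s) = ?e (embT (\<sigma> (j,\<mu>,j',\<mu>')) t)"
            using key[OF a] by simp
          then show "?e (fst p) = ?e (snd p)" using st p by auto
        qed
      qed
      also have "\<dots> \<longleftrightarrow> (\<forall>j\<in>I. \<forall>\<mu>\<in>Lam. Yv j \<mu> (xs!0) = Yv j \<mu> (xs!1)) \<or>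
                        (\<forall>j'\<in>I. \<forall>\<mu>'\<in>Lam. Yv j' \<mu>' (xs!2) = Yv j' \<mu>' (xs!3))"
        by blast
      also have "\<dots> \<longleftrightarrow> (xs!0 = xs!1 \<or> xs!2 = xs!3)"
      proof -
        have "(\<forall>j\<in>I. \<forall>\<mu>\<in>Lam. Yv j \<mu> (xs!0) = Yv j \<mu> (xs!1)) \<longleftrightarrow> xs!0 = xs!1"
          using separation[OF ns, of "xs!0" "xs!1"] xsS[of 0] xsS[of 1] by auto
        moreover have "(\<forall>j\<in>I. \<forall>\<mu>\<in>Lam. Yv j \<mu> (xs!2) = Yv j \<mu> (xs!3)) \<longleftrightarrow> xs!2 = xs!3"
          using separation[OF ns, of "xs!2" "xs!3"] xsS[of 2] xsS[of 3] by auto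
        ultimately show ?thesis by blast
      qed
      also have "\<dots> \<longleftrightarrow> xs \<in> D4 S" using True by (simp add: D4_def)
      finally show ?thesis by simp
    qed
  qed
  then show ?thesis using SysOK unfolding algebraic_set_def by blast
qed

end



context rees begin

fun lamS :: "('l \<times> 'g \<times> 'i) trm \<Rightarrow> 'l" where
  "lamS (Var k) = l1" | "lamS (Cst c) = fst c" | "lamS (Mul s t) = lamS s"
| "lamS (Inv s) = lamS s" | "lamS Unit = l1"

fun irS :: "('l \<times> 'g \<times> 'i) trm \<Rightarrow> 'i" where
  "irS (Var k) = i1" | "irS (Cst c) = snd (snd c)" | "irS (Mul s t) = irS t"
| "irS (Inv s) = irS s" | "irS Unit = i1"

fun trS :: "('l \<times> 'g \<times> 'i) trm \<Rightarrow> 'g trm" where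
  "trS (Var k) = Var k" | "trS (Cst c) = Cst (fst (snd c))"
| "trS (Mul s t) = Mul (Mul (trS s) (Cst (P (irS s) (lamS t)))) (trS t)"
| "trS (Inv s) = Mul (Mul (Cst (inv (P (irS s) (lamS s)))) (Inv (trS s))) (Cst (inv (P (irS s) (lamS s))))"
| "trS Unit = Unit"

lemma vars_trS: "vars (trS t) = vars t" by (induction t) auto

lemma trS_props:
  assumes "t \<in> rees_terms G Lam I" "\<And>k. y k \<in> carrier G"
  shows "evS (\<lambda>k. (l1, y k, i1)) t = (lamS t, evG y (trS t), irS t) \<and> lamS t \<in> Lam \<and> irS t \<in> I
     \<and> trS t \<in> group_terms G \<and> evG y (trS t) \<in> carrier G"
  using assms unfolding rees_terms_def
proof (induction t)
  case (Var x) then show ?case using l1 i1 by (simp add: group_terms_def)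
next
  case (Cst x) then show ?case by (cases x) (auto simp: rees_carrier_def group_terms_def)
next
  case (Mul s t) then show ?case by (auto simp: Pc group_terms_def)
next
  case (Inv s) then show ?case by (auto simp: Pc group_terms_def)
qed auto

lemma group_D4:
  assumes red: "rees_ed G P Lam I"
  shows "algebraic_set (group_terms G) (carrier G) (mult G) (m_inv G) (one G) 4 (D4 (carrier G))"
proof -
  have "algebraic_set (rees_terms G Lam I) S (rees_mult G P) (rees_inv G P) undefined 4 (D4 S)"
    using red unfolding rees_ed_def by (intro ed_D4 rees_Lvar)
  then obtain T where T: "\<forall>(s, t) \<in> T. s \<in> rees_terms G Lam I \<and> t \<in> rees_terms G Lam I \<and> vars s \<subseteq> {..<4} \<and> vars t \<subseteq> {..<4}"
    and DT: "D4 S = solution_set S (rees_mult G P) (rees_inv G P) undefined 4 T"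
    unfolding algebraic_set_def by blast
  define Sys where "Sys = (\<lambda>(s, t). (trS s, trS t)) ` T"
  have SysOK: "\<forall>(s, t) \<in> Sys. s \<in> group_terms G \<and> t \<in> group_terms G \<and> vars s \<subseteq> {..<4} \<and> vars t \<subseteq> {..<4}"
  proof -
    have "\<forall>(s,t)\<in>T. trS s \<in> group_terms G \<and> trS t \<in> group_terms G \<and> vars (trS s) \<subseteq> {..<4} \<and> vars (trS t) \<subseteq> {..<4}"
    proof (intro ballI, clarify)
      fix s t assume st: "(s,t) \<in> T"
      then have h: "s \<in> rees_terms G Lam I \<and> t \<in> rees_terms G Lam I \<and> vars s \<subseteq> {..<4} \<and> vars t \<subseteq> {..<4}"
        using T by blast
      show "trS s \<in> group_terms G \<and> trS t \<in> group_terms G \<and> vars (trS s) \<subseteq> {..<4} \<and> vars (trS t) \<subseteq> {..<4}"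
        using h trS_props[of s "\<lambda>_. \<one>"] trS_props[of t "\<lambda>_. \<one>"] by (simp add: vars_trS)
    qed
    then show ?thesis unfolding Sys_def by auto
  qed
  define emb where "emb = (\<lambda>g::'g. (l1, g, i1))"
  have main: "map emb ys \<in> D4 S \<longleftrightarrow> (\<forall>(s, t)\<in>T. evG (\<lambda>k. if k < 4 then ys!k else \<one>) (trS s)
       = evG (\<lambda>k. if k < 4 then ys!k else \<one>) (trS t) \<and> lamS s = lamS t \<and> irS s = irS t)"
    if ys: "length ys = 4" "set ys \<subseteq> carrier G" for ys
  proof -
    define y where "y = (\<lambda>k. if k < 4 then ys!k else \<one>)"
    have yc: "\<And>k. y k \<in> carrier G" using ys by (auto simp: y_def)
    have ev: "evS (nth (map emb ys)) s = evS (\<lambda>k. (l1, y k, i1)) s" if "vars s \<subseteq> {..<4}" for s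
      using that ys by (intro eval_cong) (auto simp: y_def emb_def)
    have "set (map emb ys) \<subseteq> S" using ys l1 i1 by (auto simp: emb_def rees_carrier_def)
    then have "map emb ys \<in> D4 S \<longleftrightarrow> (\<forall>(s, t)\<in>T. evS (\<lambda>k. (l1, y k, i1)) s = evS (\<lambda>k. (l1, y k, i1)) t)"
      using DT ys T ev unfolding solution_set_def by (auto 0 3)
    also have "\<dots> \<longleftrightarrow> (\<forall>(s, t)\<in>T. evG y (trS s) = evG y (trS t) \<and> lamS s = lamS t \<and> irS s = irS t)"
      using T trS_props[OF _ yc] by fastforce
    finally show ?thesis by (simp add: y_def)
  qed
  have lr: "lamS s = lamS t \<and> irS s = irS t" if "(s,t) \<in> T" for s t
  proof -
    have "map emb [\<one>,\<one>,\<one>,\<one>] \<in> D4 S" using l1 i1 by (auto simp: D4_def emb_def rees_carrier_def)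
    then show ?thesis using main[of "[\<one>,\<one>,\<one>,\<one>]"] that by auto
  qed
  have "D4 (carrier G) = solution_set (carrier G) (mult G) (m_inv G) (one G) 4 Sys"
  proof (rule Set.set_eqI)
    fix ys
    show "ys \<in> D4 (carrier G) \<longleftrightarrow> ys \<in> solution_set (carrier G) (mult G) (m_inv G) (one G) 4 Sys"
    proof (cases "length ys = 4 \<and> set ys \<subseteq> carrier G")
      case False
      then show ?thesis by (auto simp: D4_def solution_set_def)
    next
      case True
      have inj: "map emb ys \<in> D4 S \<longleftrightarrow> ys \<in> D4 (carrier G)"
        using True l1 i1 by (auto simp: D4_def emb_def rees_carrier_def)
      have ev: "evG (\<lambda>k. if k < 4 then ys!k else \<one>) (trS s) = evG (nth ys) (trS s)" if "vars s \<subseteq> {..<4}" for s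
        using that by (intro eval_cong) (auto simp: vars_trS)
      show ?thesis using main[of ys] True inj lr ev T unfolding solution_set_def Sys_def
        by (auto 0 3)
    qed
  qed
  then show ?thesis using SysOK unfolding algebraic_set_def by blast
qed

end



context rees begin

lemma last_mult: "snd (snd (rees_mult G P x y)) = snd (snd y)" by (cases x; cases y) simp
lemma last_inv: "snd (snd (rees_inv G P x)) = snd (snd x)" by (cases x) simp
lemma fst_mult: "fst (rees_mult G P x y) = fst x" by (cases x; cases y) simp
lemma fst_inv: "fst (rees_inv G P x) = fst x" by (cases x) simp

lemma nth2: "k \<in> vars t \<Longrightarrow> vars t \<subseteq> {..<2} \<Longrightarrow> k = 0 \<or> k = 1"
  by auto

lemma C_last:
  "t \<in> rees_terms G Lam I \<Longrightarrow> vars t \<subseteq> {..<2} \<Longrightarrow>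
   \<exists>h. (\<forall>x y. snd (snd (evS (nth [x,y]) t)) = h (snd (snd x)) (snd (snd y))) \<and>
       (h = (\<lambda>p q. p) \<or> h = (\<lambda>p q. q) \<or> (\<exists>k. h = (\<lambda>p q. k)))"
proof (induction t)
  case (Var k)
  then have "k = 0 \<or> k = 1" by auto
  then show ?case
  proof
    assume "k = 0" then show ?thesis by (intro exI[of _ "\<lambda>p q. p"]) simp
  next
    assume "k = 1" then show ?thesis by (intro exI[of _ "\<lambda>p q. q"]) simp
  qed
next
  case (Cst c) then show ?case by (intro exI[of _ "\<lambda>p q. snd (snd c)"]) auto
next
  case (Mul s t)
  then have "t \<in> rees_terms G Lam I" "vars t \<subseteq> {..<2}" by (auto simp: rees_terms_def)
  then show ?case using Mul.IH(2) by (simp add: last_mult)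
next
  case (Inv s)
  then have "s \<in> rees_terms G Lam I" "vars s \<subseteq> {..<2}" by (auto simp: rees_terms_def)
  then show ?case using Inv.IH by (simp add: last_inv)
next
  case Unit then show ?case by (simp add: rees_terms_def)
qed

lemma C_fst:
  "t \<in> rees_terms G Lam I \<Longrightarrow> vars t \<subseteq> {..<2} \<Longrightarrow>
   \<exists>h. (\<forall>x y. fst (evS (nth [x,y]) t) = h (fst x) (fst y)) \<and>
       (h = (\<lambda>p q. p) \<or> h = (\<lambda>p q. q) \<or> (\<exists>k. h = (\<lambda>p q. k)))"
proof (induction t)
  case (Var k)
  then have "k = 0 \<or> k = 1" by auto
  then show ?case
  proof
    assume "k = 0" then show ?thesis by (intro exI[of _ "\<lambda>p q. p"]) simp
  next
    assume "k = 1" then show ?thesis by (intro exI[of _ "\<lambda>p q. q"]) simp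
  qed
next
  case (Cst c) then show ?case by (intro exI[of _ "\<lambda>p q. fst c"]) auto
next
  case (Mul s t)
  then have "s \<in> rees_terms G Lam I" "vars s \<subseteq> {..<2}" by (auto simp: rees_terms_def)
  then show ?case using Mul.IH(1) by (simp add: fst_mult)
next
  case (Inv s)
  then have "s \<in> rees_terms G Lam I" "vars s \<subseteq> {..<2}" by (auto simp: rees_terms_def)
  then show ?case using Inv.IH by (simp add: fst_inv)
next
  case Unit then show ?case by (simp add: rees_terms_def)
qed

lemma PI_gen:
  fixes \<pi> :: "('l \<times> 'g \<times> 'i) \<Rightarrow> 'z"
  assumes pm: "\<And>x y x' y'. x \<in> S \<Longrightarrow> y \<in> S \<Longrightarrow> x' \<in> S \<Longrightarrow> y' \<in> S \<Longrightarrow> \<pi> x = \<pi> x' \<Longrightarrow> \<pi> y = \<pi> y'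
       \<Longrightarrow> \<pi> (rees_mult G P x y) = \<pi> (rees_mult G P x' y')"
    and pinv: "\<And>x x'. x \<in> S \<Longrightarrow> x' \<in> S \<Longrightarrow> \<pi> x = \<pi> x' \<Longrightarrow> \<pi> (rees_inv G P x) = \<pi> (rees_inv G P x')"
  shows "t \<in> rees_terms G Lam I \<Longrightarrow> (\<And>k. k \<in> vars t \<Longrightarrow> \<rho> k \<in> S \<and> \<rho>' k \<in> S \<and> \<pi> (\<rho> k) = \<pi> (\<rho>' k))
     \<Longrightarrow> \<pi> (evS \<rho> t) = \<pi> (evS \<rho>' t)"
proof (induction t)
  case (Mul s t)
  have st: "s \<in> rees_terms G Lam I" "t \<in> rees_terms G Lam I" using Mul.prems by (auto simp: rees_terms_def)
  have i1: "\<pi> (evS \<rho> s) = \<pi> (evS \<rho>' s)" by (rule Mul.IH(1)[OF st(1)]) (use Mul.prems in auto)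
  have i2: "\<pi> (evS \<rho> t) = \<pi> (evS \<rho>' t)" by (rule Mul.IH(2)[OF st(2)]) (use Mul.prems in auto)
  show ?case using i1 i2 Mul.prems st
    by (simp, intro pm rees_Lclos) auto
next
  case (Inv s)
  have st: "s \<in> rees_terms G Lam I" using Inv.prems by (auto simp: rees_terms_def)
  have i1: "\<pi> (evS \<rho> s) = \<pi> (evS \<rho>' s)" by (rule Inv.IH[OF st]) (use Inv.prems in auto)
  show ?case using i1 Inv.prems st
    by (simp, intro pinv rees_Lclos) auto
qed auto

lemma not_ed_generic:
  fixes \<pi> :: "('l \<times> 'g \<times> 'i) \<Rightarrow> 'z" and c :: "('l \<times> 'g \<times> 'i) \<Rightarrow> 'c"
  assumes aS: "a \<in> S" "b \<in> S" "a \<noteq> b" "\<pi> a = \<pi> b"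
    and PI: "\<And>t \<rho> \<rho>'. t \<in> rees_terms G Lam I \<Longrightarrow> (\<And>k. k \<in> vars t \<Longrightarrow> \<rho> k \<in> S \<and> \<rho>' k \<in> S \<and> \<pi> (\<rho> k) = \<pi> (\<rho>' k))
     \<Longrightarrow> \<pi> (evS \<rho> t) = \<pi> (evS \<rho>' t)"
    and C: "\<And>t. t \<in> rees_terms G Lam I \<Longrightarrow> vars t \<subseteq> {..<2} \<Longrightarrow>
      \<exists>h. (\<forall>x y. c (evS (nth [x,y]) t) = h (c x) (c y)) \<and>
       (h = (\<lambda>p q. p) \<or> h = (\<lambda>p q. q) \<or> (\<exists>k. h = (\<lambda>p q. k)))"
    and ext: "\<And>x y. x \<in> S \<Longrightarrow> y \<in> S \<Longrightarrow> \<pi> x = \<pi> y \<Longrightarrow> c x = c y \<Longrightarrow> x = y"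
  shows "\<not> rees_ed G P Lam I"
proof
  assume red: "rees_ed G P Lam I"
  let ?sol = "solution_set S (rees_mult G P) (rees_inv G P) undefined 2"
  let ?Y1 = "?sol {(Var 0, Var 1)}"
  let ?Y2 = "?sol {(Var 0, Cst a), (Var 1, Cst b)}"
  have A1: "algebraic_set (rees_terms G Lam I) S (rees_mult G P) (rees_inv G P) undefined 2 ?Y1"
    unfolding algebraic_set_def by (rule exI[of _ "{(Var 0, Var 1)}"]) (simp add: rees_Lvar)
  have A2: "algebraic_set (rees_terms G Lam I) S (rees_mult G P) (rees_inv G P) undefined 2 ?Y2"
    unfolding algebraic_set_def
    by (rule exI[of _ "{(Var 0, Cst a), (Var 1, Cst b)}"]) (simp add: rees_Lvar rees_terms_def aS)
  have "algebraic_set (rees_terms G Lam I) S (rees_mult G P) (rees_inv G P) undefined 2 (\<Union>{?Y1, ?Y2})"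
    using A1 A2 red unfolding rees_ed_def by (intro red[unfolded rees_ed_def equational_domain_def, rule_format]) auto
  then obtain T where T: "\<forall>(s, t) \<in> T. s \<in> rees_terms G Lam I \<and> t \<in> rees_terms G Lam I \<and> vars s \<subseteq> {..<2} \<and> vars t \<subseteq> {..<2}"
    and YT: "\<Union>{?Y1, ?Y2} = ?sol T"
    unfolding algebraic_set_def by blast
  have ca: "c a \<noteq> c b" using ext aS by blast
  have m1: "[a,b] \<in> ?sol T" "[a,a] \<in> ?sol T" "[b,b] \<in> ?sol T"
    using aS unfolding YT[symmetric] by (auto simp: solution_set_def)
  have "\<forall>(s,t)\<in>T. evS (nth [b,a]) s = evS (nth [b,a]) t"
  proof (intro ballI, clarify)
    fix s t assume st: "(s,t) \<in> T"
    then have h: "s \<in> rees_terms G Lam I" "t \<in> rees_terms G Lam I" "vars s \<subseteq> {..<2}" "vars t \<subseteq> {..<2}"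
      using T by auto
    have e1: "evS (nth [a,b]) s = evS (nth [a,b]) t" using m1(1) st unfolding solution_set_def by blast
    have e2: "evS (nth [a,a]) s = evS (nth [a,a]) t" using m1(2) st unfolding solution_set_def by blast
    have e3: "evS (nth [b,b]) s = evS (nth [b,b]) t" using m1(3) st unfolding solution_set_def by blast
    have sw: "\<pi> (evS (nth [b,a]) u) = \<pi> (evS (nth [a,b]) u)" if "u \<in> rees_terms G Lam I" "vars u \<subseteq> {..<2}" for u
    proof (rule PI[OF that(1)])
      fix k assume "k \<in> vars u"
      then have "k = 0 \<or> k = 1" using that by auto
      then show "[b, a] ! k \<in> S \<and> [a, b] ! k \<in> S \<and> \<pi> ([b, a] ! k) = \<pi> ([a, b] ! k)" using aS by auto
    qed
    have p: "\<pi> (evS (nth [b,a]) s) = \<pi> (evS (nth [b,a]) t)"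
      using sw[OF h(1,3)] sw[OF h(2,4)] e1 by simp
    obtain hs where hs: "\<forall>x y. c (evS (nth [x,y]) s) = hs (c x) (c y)"
      "hs = (\<lambda>p q. p) \<or> hs = (\<lambda>p q. q) \<or> (\<exists>k. hs = (\<lambda>p q. k))" using C[OF h(1,3)] by (elim exE conjE) (rule that)
    obtain ht where ht: "\<forall>x y. c (evS (nth [x,y]) t) = ht (c x) (c y)"
      "ht = (\<lambda>p q. p) \<or> ht = (\<lambda>p q. q) \<or> (\<exists>k. ht = (\<lambda>p q. k))" using C[OF h(2,4)] by (elim exE conjE) (rule that)
    have q1: "hs (c a) (c b) = ht (c a) (c b)" using e1 hs(1) ht(1) by metis
    have q2: "hs (c a) (c a) = ht (c a) (c a)" using e2 hs(1) ht(1) by metis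
    have q3: "hs (c b) (c b) = ht (c b) (c b)" using e3 hs(1) ht(1) by metis
    have "hs (c b) (c a) = ht (c b) (c a)"
      using hs(2) ht(2) q1 q2 q3 ca by auto
    then have q: "c (evS (nth [b,a]) s) = c (evS (nth [b,a]) t)" using hs(1) ht(1) by metis
    have inS: "evS (nth [b,a]) u \<in> S" if "u \<in> rees_terms G Lam I" "vars u \<subseteq> {..<2}" for u
    proof (rule rees_Lclos[OF that(1)])
      fix k assume "k \<in> vars u"
      then have "k = 0 \<or> k = 1" using that by auto
      then show "[b, a] ! k \<in> S" using aS by auto
    qed
    show "evS (nth [b,a]) s = evS (nth [b,a]) t"
      using ext[OF inS[OF h(1,3)] inS[OF h(2,4)] p q] .
  qed
  then have "[b,a] \<in> ?sol T" using aS by (simp add: solution_set_def)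
  moreover have "[b,a] \<notin> \<Union>{?Y1, ?Y2}" using aS(3) by (auto simp: solution_set_def)
  ultimately show False using YT by (metis Union_insert ccpo_Sup_singleton)
qed

end



context rees begin

lemma rows_not_ed:
  assumes ij: "i \<in> I" "j \<in> I" "i \<noteq> j" and rows: "\<forall>l\<in>Lam. P i l = P j l"
  shows "\<not> rees_ed G P Lam I"
proof -
  define \<pi> where "\<pi> = (\<lambda>x::'l \<times> 'g \<times> 'i. (fst x, fst (snd x), if snd (snd x) = j then i else snd (snd x)))"
  have Peq: "P k m = P k' m" if "k \<in> I" "k' \<in> I" "m \<in> Lam" "(if k = j then i else k) = (if k' = j then i else k')" for k k' m
    using that rows by (auto split: if_splits)
  have pm: "\<pi> (rees_mult G P x y) = \<pi> (rees_mult G P x' y')"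
    if "x \<in> S" "y \<in> S" "x' \<in> S" "y' \<in> S" "\<pi> x = \<pi> x'" "\<pi> y = \<pi> y'" for x y x' y'
  proof -
    obtain l g k where x: "x = (l,g,k)" by (cases x)
    obtain m h k2 where y: "y = (m,h,k2)" by (cases y)
    obtain l' g' k' where x': "x' = (l',g',k')" by (cases x')
    obtain m' h' k2' where y': "y' = (m',h',k2')" by (cases y')
    have "P k m = P k' m" using that x y x' y' by (intro Peq) (auto simp: rees_carrier_def \<pi>_def)
    then show ?thesis using that x y x' y' by (auto simp: \<pi>_def)
  qed
  have pinv: "\<pi> (rees_inv G P x) = \<pi> (rees_inv G P x')"
    if "x \<in> S" "x' \<in> S" "\<pi> x = \<pi> x'" for x x'
  proof -
    obtain l g k where x: "x = (l,g,k)" by (cases x)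
    obtain l' g' k' where x': "x' = (l',g',k')" by (cases x')
    have "P k l = P k' l" using that x x' by (intro Peq) (auto simp: rees_carrier_def \<pi>_def)
    then show ?thesis using that x x' by (auto simp: \<pi>_def)
  qed
  show ?thesis
  proof (rule not_ed_generic[where \<pi>=\<pi> and c="\<lambda>x. snd (snd x)" and a="(l1, \<one>, i)" and b="(l1, \<one>, j)"])
    show "(l1, \<one>, i) \<in> S" "(l1, \<one>, j) \<in> S" using ij l1 by (auto simp: rees_carrier_def)
    show "(l1, \<one>, i) \<noteq> (l1, \<one>, j)" using ij by simp
    show "\<pi> (l1, \<one>, i) = \<pi> (l1, \<one>, j)" by (simp add: \<pi>_def)
    show "\<pi> (evS \<rho> t) = \<pi> (evS \<rho>' t)"
      if "t \<in> rees_terms G Lam I" "\<And>k. k \<in> vars t \<Longrightarrow> \<rho> k \<in> S \<and> \<rho>' k \<in> S \<and> \<pi> (\<rho> k) = \<pi> (\<rho>' k)" for t \<rho> \<rho>'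
      using pm pinv that by (intro PI_gen[of \<pi>]) blast+
    show "\<exists>h. (\<forall>x y. snd (snd (evS (nth [x,y]) t)) = h (snd (snd x)) (snd (snd y))) \<and>
       (h = (\<lambda>p q. p) \<or> h = (\<lambda>p q. q) \<or> (\<exists>k. h = (\<lambda>p q. k)))"
      if "t \<in> rees_terms G Lam I" "vars t \<subseteq> {..<2}" for t
      using C_last[OF that] .
    show "x = y" if "x \<in> S" "y \<in> S" "\<pi> x = \<pi> y" "snd (snd x) = snd (snd y)" for x y
      using that by (cases x; cases y) (auto simp: \<pi>_def)
  qed
qed

lemma cols_not_ed:
  assumes lm: "lm1 \<in> Lam" "mu1 \<in> Lam" "lm1 \<noteq> mu1" and cols: "\<forall>k\<in>I. P k lm1 = P k mu1"
  shows "\<not> rees_ed G P Lam I"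
proof -
  define \<pi> where "\<pi> = (\<lambda>x::'l \<times> 'g \<times> 'i. (if fst x = mu1 then lm1 else fst x, fst (snd x), snd (snd x)))"
  have Peq: "P k m = P k m'" if "k \<in> I" "m \<in> Lam" "m' \<in> Lam" "(if m = mu1 then lm1 else m) = (if m' = mu1 then lm1 else m')" for k m m'
    using that cols by (auto split: if_splits)
  have pm: "\<pi> (rees_mult G P x y) = \<pi> (rees_mult G P x' y')"
    if "x \<in> S" "y \<in> S" "x' \<in> S" "y' \<in> S" "\<pi> x = \<pi> x'" "\<pi> y = \<pi> y'" for x y x' y'
  proof -
    obtain l g k where x: "x = (l,g,k)" by (cases x)
    obtain m h k2 where y: "y = (m,h,k2)" by (cases y)
    obtain l' g' k' where x': "x' = (l',g',k')" by (cases x')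
    obtain m' h' k2' where y': "y' = (m',h',k2')" by (cases y')
    have "P k m = P k m'" using that x y x' y' by (intro Peq) (auto simp: rees_carrier_def \<pi>_def)
    then show ?thesis using that x y x' y' by (auto simp: \<pi>_def)
  qed
  have pinv: "\<pi> (rees_inv G P x) = \<pi> (rees_inv G P x')"
    if "x \<in> S" "x' \<in> S" "\<pi> x = \<pi> x'" for x x'
  proof -
    obtain l g k where x: "x = (l,g,k)" by (cases x)
    obtain l' g' k' where x': "x' = (l',g',k')" by (cases x')
    have "P k l = P k l'" using that x x' by (intro Peq) (auto simp: rees_carrier_def \<pi>_def)
    then show ?thesis using that x x' by (auto simp: \<pi>_def)
  qed
  show ?thesis
  proof (rule not_ed_generic[where \<pi>=\<pi> and c="fst" and a="(lm1, \<one>, i1)" and b="(mu1, \<one>, i1)"])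
    show "(lm1, \<one>, i1) \<in> S" "(mu1, \<one>, i1) \<in> S" using lm i1 by (auto simp: rees_carrier_def)
    show "(lm1, \<one>, i1) \<noteq> (mu1, \<one>, i1)" using lm by simp
    show "\<pi> (lm1, \<one>, i1) = \<pi> (mu1, \<one>, i1)" using lm by (simp add: \<pi>_def)
    show "\<pi> (evS \<rho> t) = \<pi> (evS \<rho>' t)"
      if "t \<in> rees_terms G Lam I" "\<And>k. k \<in> vars t \<Longrightarrow> \<rho> k \<in> S \<and> \<rho>' k \<in> S \<and> \<pi> (\<rho> k) = \<pi> (\<rho>' k)" for t \<rho> \<rho>'
      using pm pinv that by (intro PI_gen[of \<pi>]) blast+
    show "\<exists>h. (\<forall>x y. fst (evS (nth [x,y]) t) = h (fst x) (fst y)) \<and>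
       (h = (\<lambda>p q. p) \<or> h = (\<lambda>p q. q) \<or> (\<exists>k. h = (\<lambda>p q. k)))"
      if "t \<in> rees_terms G Lam I" "vars t \<subseteq> {..<2}" for t
      using C_fst[OF that] .
    show "x = y" if "x \<in> S" "y \<in> S" "\<pi> x = \<pi> y" "fst x = fst y" for x y
      using that by (cases x; cases y) (auto simp: \<pi>_def split: if_splits)
  qed
qed

lemma main:
  "rees_ed G P Lam I \<longleftrightarrow> non_singular P Lam I \<and> group_ed G"
proof
  assume red: "rees_ed G P Lam I"
  have ns: "non_singular P Lam I"
  proof (rule ccontr)
    assume "\<not> non_singular P Lam I"
    then have "(\<exists>i\<in>I. \<exists>j\<in>I. (\<forall>l\<in>Lam. P i l = P j l) \<and> i \<noteq> j) \<or>
               (\<exists>l\<in>Lam. \<exists>m\<in>Lam. (\<forall>i\<in>I. P i l = P i m) \<and> l \<noteq> m)"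
      unfolding non_singular_def by blast
    then show False using rows_not_ed cols_not_ed red by blast
  qed
  have "group_ed G" unfolding group_ed_def
    by (rule ed_criterion[OF group_Lsub group_Lclos[OF is_group] group_D4[OF red]]) auto
  then show "non_singular P Lam I \<and> group_ed G" using ns by simp
next
  assume "non_singular P Lam I \<and> group_ed G"
  then show "rees_ed G P Lam I" unfolding rees_ed_def
    by (intro ed_criterion[OF rees_Lsub rees_Lclos rees_D4]) auto
qed

end

theorem mainTheorem7:
  fixes G :: "('g, 'b) monoid_scheme" and P :: "'i \<Rightarrow> 'l \<Rightarrow> 'g"
    and Lam :: "'l set" and I :: "'i set" and l1 :: 'l and i1 :: 'i
  assumes "group G"
    and "sandwich_matrix G P Lam I l1 i1"
  shows "rees_ed G P Lam I \<longleftrightarrow> non_singular P Lam I \<and> group_ed G"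
proof -
  interpret rees G P Lam I l1 i1
    using assms by (simp add: rees_def rees_axioms_def)
  show ?thesis by (rule main)
qed



end
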